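(* For any finite simple graph $X$ and any update sequence $\pi\in S_X$, the increasing extended threshold SDS map $\mathbf{F}^\uparrow_\pi$ has no periodic orbit of length $\ge 2$, and the increasing extended threshold GCA map $\mathbf{F}^\uparrow$ has no periodic orbit of length $\ge 3$.
   Context: Let $X$ be a finite simple graph with vertices $1,\dots,n$; $d(v)$ is the degree of $v$ and $n[v]$ the closed neighborhood of $v$. An extended vertex state is $s_v=(x_v,k_v)\in\{0,1\}\times\{1,\dots,d(v)+1\}$, and $\mathcal{S}$ is the product of these sets. Let $\sigma(x[v])=|\{u\in n[v]:x_u=1\}|$. The increasing vertex function maps $(x_v,k_v)$ to $(x_v',k_v')$ with $x_v'=1$ iff $\sigma(x[v])\ge k_v$, and $k_v'=k_v+1$ if $x_v=0$ and $\sigma(x[v])\ge k_v$, else $k_v'=k_v$. The local map $F^\uparrow_v$ updates only coordinate $v$ by this rule. For a permutation $\pi=(\pi_1,\dots,\pi_n)$ of the vertices, $\mathbf{F}^\uparrow_\pi=F^\uparrow_{\pi_n}\circ\cdots\circ F^\uparrow_{\pi_1}$; $\mathbf{F}^\uparrow$ applies the vertex function at all vertices simultaneously. A periodic orbit of length $m$ is a cycle of $m$ distinct states under iteration of the map. *)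

theory Defs
  imports Main
begin

definition simple_graph :: "nat \<Rightarrow> (nat \<Rightarrow> nat \<Rightarrow> bool) \<Rightarrow> bool" where
  "simple_graph n E \<longleftrightarrow>
     (\<forall>u v. E u v \<longrightarrow> u \<in> {1..n} \<and> v \<in> {1..n}) \<and>
     (\<forall>u v. E u v \<longrightarrow> E v u) \<and> (\<forall>v. \<not> E v v)"

definition degree :: "nat \<Rightarrow> (nat \<Rightarrow> nat \<Rightarrow> bool) \<Rightarrow> nat \<Rightarrow> nat" where
  "degree n E v = card {u \<in> {1..n}. E v u}"

definition closed_nbhd :: "nat \<Rightarrow> (nat \<Rightarrow> nat \<Rightarrow> bool) \<Rightarrow> nat \<Rightarrow> nat set" where
  "closed_nbhd n E v = insert v {u \<in> {1..n}. E v u}"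

text \<open>States are functions on nat; outside {1..n} they are fixed to (0,1)
  so that states correspond bijectively to elements of the product set.\<close>
type_synonym state = "nat \<Rightarrow> nat \<times> nat"

definition ext_states :: "nat \<Rightarrow> (nat \<Rightarrow> nat \<Rightarrow> bool) \<Rightarrow> state set" where
  "ext_states n E = {s. (\<forall>v\<in>{1..n}. fst (s v) \<in> {0,1} \<and> snd (s v) \<in> {1..degree n E v + 1})
                        \<and> (\<forall>v. v \<notin> {1..n} \<longrightarrow> s v = (0,1))}"

definition sigma :: "nat \<Rightarrow> (nat \<Rightarrow> nat \<Rightarrow> bool) \<Rightarrow> state \<Rightarrow> nat \<Rightarrow> nat" where
  "sigma n E s v = card {u \<in> closed_nbhd n E v. fst (s u) = 1}"

definition inc_vertex_fun :: "nat \<Rightarrow> (nat \<Rightarrow> nat \<Rightarrow> bool) \<Rightarrow> state \<Rightarrow> nat \<Rightarrow> nat \<times> nat" where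
  "inc_vertex_fun n E s v =
     (let x = fst (s v); k = snd (s v); sg = sigma n E s v in
      (if sg \<ge> k then 1 else 0, if x = 0 \<and> sg \<ge> k then k + 1 else k))"

definition local_map :: "nat \<Rightarrow> (nat \<Rightarrow> nat \<Rightarrow> bool) \<Rightarrow> nat \<Rightarrow> state \<Rightarrow> state" where
  "local_map n E v s = s(v := inc_vertex_fun n E s v)"

text \<open>SDS map F_\<pi> = F_{\<pi>_n} \<circ> ... \<circ> F_{\<pi>_1}; \<pi> is a list, applied left to right\<close>
definition sds_map :: "nat \<Rightarrow> (nat \<Rightarrow> nat \<Rightarrow> bool) \<Rightarrow> nat list \<Rightarrow> state \<Rightarrow> state" where
  "sds_map n E \<pi> s = fold (local_map n E) \<pi> s"

definition gca_map :: "nat \<Rightarrow> (nat \<Rightarrow> nat \<Rightarrow> bool) \<Rightarrow> state \<Rightarrow> state" where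
  "gca_map n E s = (\<lambda>v. if v \<in> {1..n} then inc_vertex_fun n E s v else s v)"

definition is_perm_seq :: "nat \<Rightarrow> nat list \<Rightarrow> bool" where
  "is_perm_seq n \<pi> \<longleftrightarrow> distinct \<pi> \<and> set \<pi> = {1..n}"

definition periodic_orbit :: "('a \<Rightarrow> 'a) \<Rightarrow> 'a \<Rightarrow> nat \<Rightarrow> bool" where
  "periodic_orbit f s m \<longleftrightarrow> m \<ge> 1 \<and> (f ^^ m) s = s \<and> inj_on (\<lambda>i. (f ^^ i) s) {0..<m}"

end

theory Submission
  imports Defs
begin

definition wt :: "nat \<times> nat \<Rightarrow> nat" where
  "wt p = 2 * snd p + (if fst p = 0 then 1 else 0)"

lemma inc_props:
  shows "wt (s v) \<le> wt (inc_vertex_fun n E s v)"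
    and "fst (inc_vertex_fun n E s v) \<le> 1"
    and "fst (s v) \<le> 1 \<Longrightarrow> wt (inc_vertex_fun n E s v) = wt (s v) \<Longrightarrow> inc_vertex_fun n E s v = s v"
  unfolding inc_vertex_fun_def Let_def wt_def
  by (cases "s v"; auto split: if_splits)+

lemma generic:
  fixes f :: "state \<Rightarrow> state" and s :: state and m :: nat
  assumes inv: "\<And>s. P s \<Longrightarrow> P (f s)"
    and mono: "\<And>s u. P s \<Longrightarrow> wt (s u) \<le> wt (f s u)"
    and fx: "\<And>s. P s \<Longrightarrow> (\<forall>u. wt (f s u) = wt (s u)) \<Longrightarrow> f s = s"
    and P: "P s" and per: "periodic_orbit f s m"
  shows "m < 2"
proof (rule ccontr)
  assume "\<not> m < 2"
  hence m2: "m \<ge> 2" by simp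
  have Pi: "P ((f ^^ i) s)" for i by (induction i) (auto simp: P inv)
  have step: "wt (f s u) \<le> wt ((f ^^ Suc j) s u)" for j u
  proof (induction j)
    case 0 then show ?case by simp
  next
    case (Suc j)
    have "wt ((f ^^ Suc j) s u) \<le> wt (f ((f ^^ Suc j) s) u)" using mono Pi by blast
    then show ?case using Suc by simp
  qed
  obtain j where mj: "m = Suc j" using m2 by (cases m) auto
  have fm: "(f ^^ m) s = s" using per unfolding periodic_orbit_def by simp
  have "\<forall>u. wt (f s u) = wt (s u)"
  proof
    fix u
    have "wt (f s u) \<le> wt (s u)" using step[where j=j and u=u] fm mj by simp
    moreover have "wt (s u) \<le> wt (f s u)" using mono P by blast
    ultimately show "wt (f s u) = wt (s u)" by simp
  qed
  hence "f s = s" using fx P by blast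
  moreover have "(f ^^ 1) s \<noteq> (f ^^ 0) s"
  proof
    assume "(f ^^ 1) s = (f ^^ 0) s"
    moreover have "inj_on (\<lambda>i. (f ^^ i) s) {0..<m}" using per unfolding periodic_orbit_def by simp
    moreover have "(1::nat) \<in> {0..<m}" "(0::nat) \<in> {0..<m}" using m2 by auto
    ultimately have "(1::nat) = 0" by (meson inj_onD)
    thus False by simp
  qed
  ultimately show False by simp
qed

lemma local_mono: "wt (s u) \<le> wt (local_map n E v s u)"
  unfolding local_map_def using inc_props(1) by (cases "u = v") auto

lemma fold_props:
  assumes "\<forall>u. fst (s u) \<le> 1"
  shows "(\<forall>u. fst (fold (local_map n E) \<pi> s u) \<le> 1) \<and> (\<forall>u. wt (s u) \<le> wt (fold (local_map n E) \<pi> s u))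
     \<and> ((\<forall>u. wt (fold (local_map n E) \<pi> s u) = wt (s u)) \<longrightarrow> fold (local_map n E) \<pi> s = s)"
  using assms
proof (induction \<pi> arbitrary: s)
  case Nil then show ?case by simp
next
  case (Cons v \<pi>)
  define t where "t = local_map n E v s"
  have tP: "\<forall>u. fst (t u) \<le> 1" using Cons.prems inc_props(2) unfolding t_def local_map_def by auto
  have st: "wt (s u) \<le> wt (t u)" for u unfolding t_def by (rule local_mono)
  note IH = Cons.IH[OF tP]
  have fe: "fold (local_map n E) (v # \<pi>) s = fold (local_map n E) \<pi> t" by (simp add: t_def)
  show ?case unfolding fe
  proof (intro conjI impI)
    show "\<forall>u. fst (fold (local_map n E) \<pi> t u) \<le> 1" using IH by blast
    show "\<forall>u. wt (s u) \<le> wt (fold (local_map n E) \<pi> t u)" using IH st le_trans by blast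
    assume eq: "\<forall>u. wt (fold (local_map n E) \<pi> t u) = wt (s u)"
    have e1: "\<forall>u. wt (t u) = wt (s u)" using eq IH st by (metis le_antisym)
    hence "\<forall>u. wt (fold (local_map n E) \<pi> t u) = wt (t u)" using eq by simp
    hence "fold (local_map n E) \<pi> t = t" using IH by blast
    moreover have "t = s"
    proof -
      have "wt (inc_vertex_fun n E s v) = wt (s v)" using e1[rule_format, of v] unfolding t_def local_map_def by simp
      hence "inc_vertex_fun n E s v = s v" using inc_props(3) Cons.prems by blast
      thus ?thesis unfolding t_def local_map_def by auto
    qed
    ultimately show "fold (local_map n E) \<pi> t = s" by simp
  qed
qed

lemma ext_P: "s \<in> ext_states n E \<Longrightarrow> \<forall>u. fst (s u) \<le> 1"
proof
  fix u assume a: "s \<in> ext_states n E"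
  show "fst (s u) \<le> 1"
  proof (cases "u \<in> {1..n}")
    case True
    then have "fst (s u) \<in> {0,1}" using a unfolding ext_states_def by blast
    then show ?thesis by auto
  next
    case False
    then have "s u = (0,1)" using a unfolding ext_states_def by blast
    then show ?thesis by simp
  qed
qed

theorem proposition3p3:
  fixes n :: nat and E :: "nat \<Rightarrow> nat \<Rightarrow> bool"
  assumes "simple_graph n E"
  shows "(\<forall>\<pi> s m. is_perm_seq n \<pi> \<and> s \<in> ext_states n E \<and> periodic_orbit (sds_map n E \<pi>) s m
            \<longrightarrow> m < 2)
       \<and> (\<forall>s m. s \<in> ext_states n E \<and> periodic_orbit (gca_map n E) s m \<longrightarrow> m < 3)"
proof (intro conjI allI impI)
  fix \<pi> s m
  assume a: "is_perm_seq n \<pi> \<and> s \<in> ext_states n E \<and> periodic_orbit (sds_map n E \<pi>) s m"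
  show "m < 2"
    apply (rule generic[where P = "\<lambda>s. \<forall>u. fst (s u) \<le> 1" and f = "sds_map n E \<pi>" and s = s])
    using fold_props unfolding sds_map_def apply blast
    using fold_props unfolding sds_map_def apply blast
    using fold_props unfolding sds_map_def apply blast
    using a ext_P apply blast
    using a by (metis ext sds_map_def)
next
  fix s m
  assume a: "s \<in> ext_states n E \<and> periodic_orbit (gca_map n E) s m"
  have "m < 2"
  proof (rule generic[where P = "\<lambda>s. \<forall>u. fst (s u) \<le> 1" and f = "gca_map n E" and s = s])
    show "\<forall>u. fst (gca_map n E s u) \<le> 1" if "\<forall>u. fst (s u) \<le> 1" for s
      using that inc_props(2) unfolding gca_map_def by auto
    show "wt (s u) \<le> wt (gca_map n E s u)" for s u
      using inc_props(1) unfolding gca_map_def by auto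
    show "gca_map n E s = s" if "\<forall>u. fst (s u) \<le> 1" "\<forall>u. wt (gca_map n E s u) = wt (s u)" for s
    proof
      fix u show "gca_map n E s u = s u"
        using that inc_props(3)[of s u n E] unfolding gca_map_def by (auto split: if_splits)
    qed
    show "\<forall>u. fst (s u) \<le> 1" using a ext_P by blast
    show "periodic_orbit (gca_map n E) s m" using a by simp
  qed
  thus "m < 3" by simp
qed

end
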